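(* Let $z\in\mathcal F_\mathbb Z\setminus\{\Theta\}$, let $(q,r)$ be the lexicographically maximal FPF-visible inversion of $z$, and let $y=(q,r)z(q,r)$. Then $\hat\Psi^+(y,q)=\{z\}$.
   Context: Let $S_\mathbb Z$ be the group of finitely supported permutations of $\mathbb Z$. Let $\Theta(i)=i-(-1)^i$ and $\mathcal F_\mathbb Z=\{w^{-1}\Theta w:w\in S_\mathbb Z\}$. An FPF-visible inversion of $z$ is a pair $(i,j)\in\mathbb Z\times\mathbb Z$ with $i<j$ and $z(j)<\min\{i,z(i)\}$; every $z\ne\Theta$ has at least one, and there are finitely many. Let $\hat\ell_{\mathrm{FPF}}(z)=\frac12\#\{(i,j):i<j,\ z(i)>z(j),\ z(i)\ne j\}$. Define $\hat\Psi^+(y,q)=\{v\in\mathcal F_\mathbb Z:\hat\ell_{\mathrm{FPF}}(v)=\hat\ell_{\mathrm{FPF}}(y)+1,\ v=(q,j)y(q,j)\text{ for some integer }j>q\}$. *)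

theory Defs
  imports Complex_Main "HOL-Combinatorics.Transposition"
begin

definition SZ :: "(int \<Rightarrow> int) set" where
  "SZ = {w. bij w \<and> finite {i. w i \<noteq> i}}"

definition Theta :: "int \<Rightarrow> int" where
  "Theta i = i - (-1) ^ nat \<bar>i\<bar>"

definition FZ :: "(int \<Rightarrow> int) set" where
  "FZ = {inv w \<circ> Theta \<circ> w | w. w \<in> SZ}"

definition fpf_visible_inv :: "(int \<Rightarrow> int) \<Rightarrow> (int \<times> int) set" where
  "fpf_visible_inv z = {(i, j). i < j \<and> z j < min i (z i)}"

definition ellhat_fpf :: "(int \<Rightarrow> int) \<Rightarrow> rat" where
  "ellhat_fpf z = of_nat (card {(i, j). i < j \<and> z i > z j \<and> z i \<noteq> j}) / 2"

definition PsiHatPlus :: "(int \<Rightarrow> int) \<Rightarrow> int \<Rightarrow> (int \<Rightarrow> int) set" where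
  "PsiHatPlus y q = {v \<in> FZ. ellhat_fpf v = ellhat_fpf y + 1 \<and>
      (\<exists>j. j > q \<and> v = transpose q j \<circ> y \<circ> transpose q j)}"

end

theory Submission imports Defs begin

lemma Theta_eq: "Theta i = (if even i then i - 1 else i + 1)"
proof -
  have "even (nat \<bar>i\<bar>) \<longleftrightarrow> even i" by (simp add: even_nat_iff)
  then show ?thesis unfolding Theta_def by (auto simp: neg_one_even_power neg_one_odd_power)
qed

lemma Theta_Theta[simp]: "Theta (Theta i) = i"
  by (simp add: Theta_eq)

lemma Theta_neq: "Theta i \<noteq> i"
  by (simp add: Theta_eq)

lemma Theta_inv: "i < k \<Longrightarrow> Theta k < Theta i \<Longrightarrow> Theta i = k"
  by (auto simp: Theta_eq split: if_splits)

definition WW :: "nat \<Rightarrow> int set" where "WW K = {-2*int K+1..2*int K}"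

lemma Theta_out: "i \<notin> WW K \<Longrightarrow> Theta i \<notin> WW K"
  by (auto simp: Theta_eq WW_def split: if_splits; presburger)

definition ninv :: "int set \<Rightarrow> (int \<Rightarrow> int) \<Rightarrow> int" where
  "ninv A w = (\<Sum>i\<in>A. \<Sum>k\<in>A. if i < k \<and> w k < w i then 1 else 0)"

lemma double_sum_split:
  fixes D :: "int \<Rightarrow> int \<Rightarrow> int"
  assumes "finite A" "a\<in>A" "b\<in>A" "a\<noteq>b"
  shows "(\<Sum>i\<in>A. \<Sum>k\<in>A. D i k) = (\<Sum>i\<in>A-{a,b}. \<Sum>k\<in>A-{a,b}. D i k)
     + (\<Sum>e\<in>A-{a,b}. D e a + D e b + D a e + D b e) + D a a + D a b + D b a + D b b"
proof -
  define B where "B = A - {a,b}"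
  have A: "A = insert a (insert b B)" using assms by (auto simp: B_def)
  have fin: "finite B" "a\<notin>B" "b\<notin>B" using assms by (auto simp: B_def)
  show ?thesis unfolding B_def[symmetric] A using fin assms(4) by (simp add: sum.distrib algebra_simps)
qed

lemma sum_if_two:
  assumes "finite B"
  shows "(\<Sum>e\<in>B. if P e then c else 0) = (c::int) * int (card {e\<in>B. P e})"
proof -
  have "(\<Sum>e\<in>B. if P e then c else 0) = (\<Sum>e\<in>{e\<in>B. P e}. c)"
    using sum.inter_filter[OF assms, of "\<lambda>_. c" P] by simp
  then show ?thesis by simp
qed

lemma swap_lemma:
  assumes "finite A" "a\<in>A" "b\<in>A" "a<b" "inj_on w A"
  shows "ninv A (w \<circ> transpose a b) = ninv A w + (if w a < w b
     then 1 + 2*int(card{e\<in>A. a<e \<and> e<b \<and> w a<w e \<and> w e<w b})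
     else -(1+2*int(card{e\<in>A. a<e \<and> e<b \<and> w b<w e \<and> w e<w a})))"
proof -
  define w' where "w' = w \<circ> transpose a b"
  define D where "D i k = (if i < k \<and> w' k < w' i then 1 else 0) - (if i < k \<and> w k < w i then 1 else (0::int))" for i k
  have wab: "w a \<noteq> w b" using inj_onD[OF assms(5)] assms by force
  have "ninv A w' - ninv A w = (\<Sum>i\<in>A. \<Sum>k\<in>A. D i k)"
    by (simp add: ninv_def D_def sum_subtractf)
  also have "\<dots> = (\<Sum>i\<in>A-{a,b}. \<Sum>k\<in>A-{a,b}. D i k)
     + (\<Sum>e\<in>A-{a,b}. D e a + D e b + D a e + D b e) + D a a + D a b + D b a + D b b"
    by (rule double_sum_split) (use assms in auto)
  also have "(\<Sum>i\<in>A-{a,b}. \<Sum>k\<in>A-{a,b}. D i k) = 0"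
    by (auto simp: D_def w'_def intro!: sum.neutral)
  also have dd: "D a a = 0" "D b b = 0" "D b a = 0" using assms(4) by (auto simp: D_def)
  have "D a b = (if w a < w b then 1 else -1)" using assms(4) wab by (auto simp: D_def w'_def)
  moreover have "(\<Sum>e\<in>A-{a,b}. D e a + D e b + D a e + D b e) = (\<Sum>e\<in>A-{a,b}.
      (if w a < w b then (if a<e \<and> e<b \<and> w a<w e \<and> w e<w b then 2 else 0)
       else (if a<e \<and> e<b \<and> w b<w e \<and> w e<w a then -2 else 0)))"
  proof (rule sum.cong)
    fix e assume e: "e\<in>A-{a,b}"
    have "w e \<noteq> w a" "w e \<noteq> w b" using inj_onD[OF assms(5)] e assms by force+
    then show "D e a + D e b + D a e + D b e = (if w a < w b then (if a<e \<and> e<b \<and> w a<w e \<and> w e<w b then 2 else 0)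
       else (if a<e \<and> e<b \<and> w b<w e \<and> w e<w a then -2 else 0))"
      using e assms(4) wab by (auto simp: D_def w'_def)
  qed simp
  moreover have "\<dots> = (if w a < w b then 2 * int(card{e\<in>A. a<e \<and> e<b \<and> w a<w e \<and> w e<w b})
     else -2 * int(card{e\<in>A. a<e \<and> e<b \<and> w b<w e \<and> w e<w a}))"
  proof -
    have s1: "{e\<in>A-{a,b}. a<e \<and> e<b \<and> w a<w e \<and> w e<w b} = {e\<in>A. a<e \<and> e<b \<and> w a<w e \<and> w e<w b}" by auto
    have s2: "{e\<in>A-{a,b}. a<e \<and> e<b \<and> w b<w e \<and> w e<w a} = {e\<in>A. a<e \<and> e<b \<and> w b<w e \<and> w e<w a}" by auto
    have fB: "finite (A-{a,b})" using assms(1) by simp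
    show ?thesis
    proof (cases "w a < w b")
      case True
      then show ?thesis by (simp only: True if_True sum_if_two[OF fB] s1)
    next
      case False
      then show ?thesis by (simp only: False if_False sum_if_two[OF fB] s2)
    qed
  qed
  ultimately show ?thesis unfolding w'_def[symmetric] dd by (auto split: if_splits)
qed

definition good :: "nat \<Rightarrow> (int\<Rightarrow>int) \<Rightarrow> bool" where
  "good K w \<longleftrightarrow> (\<forall>i. w (w i) = i) \<and> (\<forall>i. w i \<noteq> i) \<and> (\<forall>i. i \<notin> WW K \<longrightarrow> w i = Theta i)"

lemma good_maps: "good K w \<Longrightarrow> i \<in> WW K \<Longrightarrow> w i \<in> WW K"
  unfolding good_def by (metis Theta_out)

lemma good_mono: "good K w \<Longrightarrow> K \<le> K' \<Longrightarrow> good K' w"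
  unfolding good_def WW_def by auto

lemma good_conj:
  assumes "good K w" "a \<in> WW K" "b \<in> WW K"
  shows "good K (transpose a b \<circ> w \<circ> transpose a b)"
proof -
  have inv: "\<And>i. w (w i) = i" and fpf: "\<And>i. w i \<noteq> i" and out: "\<And>i. i \<notin> WW K \<Longrightarrow> w i = Theta i"
    using assms(1) unfolding good_def by auto
  have "transpose a b (w (transpose a b i)) \<noteq> i" for i
    by (metis fpf transpose_involutory)
  moreover have "transpose a b (w (transpose a b i)) = Theta i" if "i \<notin> WW K" for i
  proof -
    have "transpose a b i = i" by (rule transpose_apply_other) (use that assms in auto)
    moreover have "Theta i \<notin> WW K" using Theta_out that by blast
    moreover have "transpose a b (Theta i) = Theta i" by (rule transpose_apply_other) (use calculation assms in auto)
    ultimately show ?thesis using out[OF that] assms by auto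
  qed
  ultimately show ?thesis unfolding good_def by (simp add: inv)
qed

lemma card_WW: "card (WW K) = 4*K"
  unfolding WW_def by simp

lemma card_pairs:
  assumes "finite W"
  shows "int (card {x \<in> W\<times>W. P (fst x) (snd x)}) = (\<Sum>i\<in>W. \<Sum>k\<in>W. if P i k then 1 else 0)"
proof -
  have "int (card {x \<in> W\<times>W. P (fst x) (snd x)}) = (\<Sum>x\<in>{x \<in> W\<times>W. P (fst x) (snd x)}. 1)" by simp
  also have "\<dots> = (\<Sum>x\<in>W\<times>W. if P (fst x) (snd x) then 1 else 0)"
    using sum.inter_filter[of "W\<times>W" "\<lambda>_. 1::int" "\<lambda>x. P (fst x) (snd x)"] assms by simp
  also have "\<dots> = (\<Sum>i\<in>W. \<Sum>k\<in>W. if P i k then 1 else 0)"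
    by (simp add: sum.cartesian_product case_prod_unfold)
  finally show ?thesis .
qed

lemma ell_window:
  assumes "good K w"
  shows "ellhat_fpf w = (of_int (ninv (WW K) w) - of_nat (2*K)) / 2"
proof -
  define W where "W = WW K"
  have inv: "\<And>i. w (w i) = i" and fpf: "\<And>i. w i \<noteq> i" and out: "\<And>i. i \<notin> W \<Longrightarrow> w i = Theta i"
    using assms(1) unfolding good_def W_def by auto
  have maps: "\<And>i. i \<in> W \<Longrightarrow> w i \<in> W" using good_maps[OF assms] W_def by auto
  have finW: "finite W" by (simp add: W_def WW_def)
  define C where "C = {x \<in> W\<times>W. fst x < snd x \<and> w (snd x) < w (fst x) \<and> w (fst x) \<noteq> snd x}"
  define D where "D = {x \<in> W\<times>W. fst x < snd x \<and> w (fst x) = snd x}"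
  define I where "I = {x \<in> W\<times>W. fst x < snd x \<and> w (snd x) < w (fst x)}"
  have C_mem: "(i < j \<and> w i > w j \<and> w i \<noteq> j) \<longleftrightarrow> (i, j) \<in> C" for i j
    proof
      assume h: "i < j \<and> w i > w j \<and> w i \<noteq> j"
      have "i \<in> W \<and> j \<in> W"
      proof (rule ccontr)
        assume "\<not> (i \<in> W \<and> j \<in> W)"
        then consider "i \<notin> W" "j \<notin> W" | "i \<notin> W" "j \<in> W" | "i \<in> W" "j \<notin> W" by blast
        then show False
        proof cases
          case 1
          then show False using h out Theta_inv by metis
        next
          case 2
          then have "i < -2*int K + 1" using h by (auto simp: W_def WW_def)
          moreover have "w j \<in> W" using maps 2 by blast
          moreover have "w i = Theta i" using out 2 by blast
          ultimately show False using h by (auto simp: W_def WW_def Theta_eq split: if_splits)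
        next
          case 3
          then have "j > 2*int K" using h by (auto simp: W_def WW_def)
          moreover have "w i \<in> W" using maps 3 by blast
          moreover have "w j = Theta j" using out 3 by blast
          ultimately show False using h by (auto simp: W_def WW_def Theta_eq split: if_splits)
        qed
      qed
      then show "(i, j) \<in> C" using h by (auto simp: C_def)
    qed (auto simp: C_def)
  have C_eq: "{(i, j). i < j \<and> w i > w j \<and> w i \<noteq> j} = C"
    using C_mem by auto
  have ID: "I = C \<union> D" using inv by (auto simp: I_def C_def D_def)
  have CD: "C \<inter> D = {}" by (auto simp: C_def D_def)
  have finI: "finite I" using finW by (simp add: I_def)
  have cI: "int (card I) = ninv W w"
    unfolding I_def ninv_def using card_pairs[OF finW, of "\<lambda>i k. i < k \<and> w k < w i"] by simp
  define A where "A = {i \<in> W. i < w i}"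
  define B where "B = {i \<in> W. w i < i}"
  have "D = (\<lambda>i. (i, w i)) ` A" by (auto simp: D_def A_def maps)
  moreover have "inj_on (\<lambda>i. (i, w i)) A" by (auto intro: inj_onI)
  ultimately have cD: "card D = card A" by (simp add: card_image)
  have "W = A \<union> B" using fpf by (auto simp: A_def B_def) (meson linorder_neqE)
  moreover have "A \<inter> B = {}" by (auto simp: A_def B_def)
  moreover have "finite A" "finite B" using finW by (auto simp: A_def B_def)
  ultimately have "card W = card A + card B" by (simp add: card_Un_disjoint)
  moreover have "w ` A = B"
  proof
    show "w ` A \<subseteq> B" using inv maps by (auto simp: A_def B_def)
    show "B \<subseteq> w ` A"
    proof
      fix i assume "i \<in> B"
      then have "w i \<in> A" "w (w i) = i" using inv maps by (auto simp: A_def B_def)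
      then show "i \<in> w ` A" by (metis imageI)
    qed
  qed
  moreover have "inj_on w A" by (metis inv inj_onI)
  ultimately have "card W = 2 * card A" by (metis card_image mult_2)
  then have cA: "card A = 2 * K" using card_WW[of K] by (simp add: W_def)
  have "card I = card C + card D"
    using ID CD finI by (simp add: card_Un_disjoint)
  then have "int (card C) = ninv W w - int (2*K)" using cI cD cA by simp
  then show ?thesis
    unfolding ellhat_fpf_def W_def[symmetric]
    by (simp add: C_eq)
qed

lemma WW_between: "a \<in> WW K \<Longrightarrow> b \<in> WW K \<Longrightarrow> a < e \<Longrightarrow> e < b \<Longrightarrow> e \<in> WW K"
  unfolding WW_def by auto

lemma finite_WW: "finite (WW K)" unfolding WW_def by simp

lemma card0_iff: "finite A \<Longrightarrow> card {e\<in>A. P e} = 0 \<longleftrightarrow> (\<forall>e\<in>A. \<not> P e)"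
  by auto

lemma key:
  assumes gy: "good K y" and qW: "q \<in> WW K" and jW: "j \<in> WW K" and qj: "q < j" and pq: "y q < q"
  shows "ellhat_fpf (transpose q j \<circ> y \<circ> transpose q j) = ellhat_fpf y + 1 \<longleftrightarrow>
    (y q < y j \<and> (\<forall>e. q<e \<and> e<j \<longrightarrow> \<not>(y q < y e \<and> y e < y j)) \<and>
     (\<forall>e. y q < e \<and> e < y j \<longrightarrow> \<not>(q < y (transpose q j e) \<and> y (transpose q j e) < j)))"
proof -
  define p where "p = y q"
  define u where "u = y j"
  define t where "t = transpose q j"
  define W where "W = WW K"
  define v where "v = t \<circ> y \<circ> t"
  define w1 where "w1 = y \<circ> t"
  have inv: "\<And>i. y (y i) = i" and fpf: "\<And>i. y i \<noteq> i" using gy unfolding good_def by auto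
  have gv: "good K v" unfolding v_def t_def by (rule good_conj[OF gy qW jW])
  have finW: "finite W" by (simp add: W_def finite_WW)
  have pW: "p \<in> W" and uW: "u \<in> W" using good_maps[OF gy] qW jW by (auto simp: p_def u_def W_def)
  have injy: "inj_on y W" by (metis inv inj_onI)
  have injw1: "inj_on w1 W"
  proof (rule inj_onI)
    fix a b assume "w1 a = w1 b"
    then have "y (w1 a) = y (w1 b)" by simp
    then have "t a = t b" by (simp add: w1_def inv)
    then show "a = b" using transpose_eq_imp_eq t_def by metis
  qed
  have pu: "p \<noteq> u" using inv qj p_def u_def by (metis less_irrefl)
  have pq': "p \<noteq> q" "p \<noteq> j" using pq qj p_def by auto
  have uq: "u \<noteq> q" "u \<noteq> j"
    unfolding u_def by (metis inv pq'(2) p_def) (metis fpf)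
  have w1p: "w1 p = q" using pq' inv by (simp add: w1_def t_def p_def)
  have w1u: "w1 u = j" using uq inv by (simp add: w1_def t_def u_def)
  have ev: "ellhat_fpf v = (of_int (ninv W v) - of_nat (2*K)) / 2" using ell_window[OF gv] W_def by simp
  have ey: "ellhat_fpf y = (of_int (ninv W y) - of_nat (2*K)) / 2" using ell_window[OF gy] W_def by simp
  have E: "ellhat_fpf v = ellhat_fpf y + 1 \<longleftrightarrow> ninv W v = ninv W y + 2"
  proof -
    have "ellhat_fpf v = ellhat_fpf y + 1 \<longleftrightarrow> (of_int (ninv W v) :: rat) = of_int (ninv W y) + 2"
      unfolding ev ey by (simp add: field_simps)
    also have "\<dots> \<longleftrightarrow> ninv W v = ninv W y + 2"
    proof -
      have "(of_int (ninv W y) :: rat) + 2 = of_int (ninv W y + 2)" by simp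
      then show ?thesis by (metis of_int_eq_iff)
    qed
    finally show ?thesis .
  qed
  define K1 where "K1 = card{e\<in>W. q<e \<and> e<j \<and> y q<y e \<and> y e<y j}"
  have S1: "ninv W w1 = ninv W y + (if y q < y j then 1 + 2*int K1
     else -(1+2*int(card{e\<in>W. q<e \<and> e<j \<and> y j<y e \<and> y e<y q})))"
    unfolding w1_def t_def K1_def by (rule swap_lemma[OF finW _ _ qj injy]) (use qW jW W_def in auto)
  have vform: "v = w1 \<circ> transpose p u"
  proof
    fix i
    show "v i = (w1 \<circ> transpose p u) i"
      using pq' uq pu inv qj
    proof -
      have yp: "y p = q" and yu: "y u = j" using inv by (auto simp: p_def u_def)
      have tq: "t q = j" and tj: "t j = q" and tp: "t p = p" and tu: "t u = u"
        using pq' uq by (auto simp: t_def)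
      consider "i = p" | "i = u" | "i = q" | "i = j" | "i \<noteq> p" "i \<noteq> u" "i \<noteq> q" "i \<noteq> j" by blast
      then show ?thesis
      proof cases
        case 1 then show ?thesis using pu by (simp add: v_def w1_def tp yp tq yu tu)
      next
        case 2
        have "v u = q" by (simp add: v_def tu yu tj)
        moreover have "(w1 \<circ> transpose p u) u = q" by (simp add: w1_def tp yp)
        ultimately show ?thesis using 2 by simp
      next
        case 3 then show ?thesis using pq' uq by (simp add: v_def w1_def tq u_def[symmetric] tu)
      next
        case 4 then show ?thesis using pq' uq by (simp add: v_def w1_def tj p_def[symmetric] tp)
      next
        case 5
        have "t i = i" using 5 by (simp add: t_def)
        moreover have "y i \<noteq> q" "y i \<noteq> j" using 5 inv yp yu by metis+
        ultimately show ?thesis using 5 by (simp add: v_def w1_def t_def)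
      qed
    qed
  qed
  show ?thesis
  proof (cases "p < u")
    case True
    define K2 where "K2 = card{e\<in>W. p<e \<and> e<u \<and> w1 p<w1 e \<and> w1 e<w1 u}"
    have S2: "ninv W v = ninv W w1 + (1 + 2*int K2)"
      unfolding vform K2_def using swap_lemma[OF finW pW uW True injw1] w1p w1u qj by simp
    have A0: "ninv W v = ninv W y + 2 \<longleftrightarrow> K1 = 0 \<and> K2 = 0"
      using S1 S2 True by (simp add: p_def u_def) presburger
    have A1: "K1 = 0 \<longleftrightarrow> (\<forall>e. q<e \<and> e<j \<longrightarrow> \<not>(p < y e \<and> y e < u))"
      unfolding K1_def p_def[symmetric] u_def[symmetric] using finW WW_between[OF qW jW] W_def by auto
    have "K2 = 0 \<longleftrightarrow> (\<forall>e\<in>W. \<not>(p<e \<and> e<u \<and> q < w1 e \<and> w1 e < j))"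
      unfolding K2_def w1p w1u using finW by (simp add: card0_iff) blast
    also have "\<dots> \<longleftrightarrow> (\<forall>e. p<e \<and> e<u \<longrightarrow> \<not>(q < w1 e \<and> w1 e < j))"
      using WW_between[of p K u] pW uW W_def by blast
    finally have A2: "K2 = 0 \<longleftrightarrow> (\<forall>e. p<e \<and> e<u \<longrightarrow> \<not>(q < y (t e) \<and> y (t e) < j))"
      by (simp add: w1_def)
    have vv: "transpose q j \<circ> y \<circ> transpose q j = v" unfolding v_def t_def ..
    have pp: "y q = p" "y j = u" "transpose q j = t" by (simp_all add: p_def u_def t_def)
    show ?thesis unfolding vv unfolding pp using E A0 A1 A2 True by blast
  next
    case False
    then have up: "u < p" using pu by simp
    have S2: "ninv W v = ninv W w1 + -(1 + 2*int (card{e\<in>W. u<e \<and> e<p \<and> w1 p<w1 e \<and> w1 e<w1 u}))"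
    proof -
      have "v = w1 \<circ> transpose u p" using vform by (simp add: transpose_commute)
      then show ?thesis using swap_lemma[OF finW uW pW up injw1] w1p w1u qj by simp
    qed
    have "ninv W v \<noteq> ninv W y + 2"
      using S1 S2 False by (simp add: p_def u_def)
    have vv: "transpose q j \<circ> y \<circ> transpose q j = v" unfolding v_def t_def ..
    have pp: "y q = p" "y j = u" "transpose q j = t" by (simp_all add: p_def u_def t_def)
    show ?thesis unfolding vv unfolding pp using E False \<open>ninv W v \<noteq> ninv W y + 2\<close> by blast
  qed
qed

context
  fixes z y :: "int \<Rightarrow> int" and q r :: int
  assumes zz: "\<And>i. z (z i) = i" and fpf: "\<And>i. z i \<noteq> i"
   and qr: "q < r" and pq: "z r < q" and ps: "z r < z q"
   and mx: "\<And>a b. a<b \<Longrightarrow> z b < a \<Longrightarrow> z b < z a \<Longrightarrow> a < q \<or> (a = q \<and> b \<le> r)"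
   and yd: "y = transpose q r \<circ> z \<circ> transpose q r"
begin

lemma zq_ne_r: "z q \<noteq> r" using zz pq by (metis less_irrefl)

lemma y_q: "y q = z r"
proof -
  have "z r \<noteq> q" "z r \<noteq> r" using pq fpf by auto
  then show ?thesis by (simp add: yd)
qed

lemma y_r: "y r = z q"
  using fpf zq_ne_r by (simp add: yd)

lemma y_oth: "e \<noteq> q \<Longrightarrow> e \<noteq> r \<Longrightarrow> y e = transpose q r (z e)"
  by (simp add: yd)

lemma condA: "y q < y r \<and> (\<forall>e. q<e \<and> e<r \<longrightarrow> \<not>(y q < y e \<and> y e < y r)) \<and>
   (\<forall>e. y q < e \<and> e < y r \<longrightarrow> \<not>(q < y (transpose q r e) \<and> y (transpose q r e) < r))"
proof (intro conjI allI impI notI)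
  show "y q < y r" using ps by (simp add: y_q y_r)
next
  fix e assume e: "q < e \<and> e < r" and h: "y q < y e \<and> y e < y r"
  have ye: "y e = transpose q r (z e)" using e by (intro y_oth) auto
  consider "z e = q" | "z e = r" | "z e \<noteq> q" "z e \<noteq> r" by blast
  then show False
  proof cases
    case 1
    then have "e = z q" using zz by metis
    moreover have "y e = r" using ye 1 by simp
    ultimately show False using h e by (simp add: y_r)
  next
    case 2
    then have "e = z r" using zz by metis
    then show False using e pq by simp
  next
    case 3
    then have "y e = z e" using ye by simp
    then have "e < q \<or> (e = q \<and> r \<le> r)" using mx[of e r] e h pq by (simp add: y_q)
    then show False using e by simp
  qed
next
  fix e assume e: "y q < e \<and> e < y r" and h: "q < y (transpose q r e) \<and> y (transpose q r e) < r"
  have ye: "y (transpose q r e) = transpose q r (z e)" by (simp add: yd)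
  consider "z e = q" | "z e = r" | "z e \<noteq> q" "z e \<noteq> r" by blast
  then show False
  proof cases
    case 1
    then show False using h ye by simp
  next
    case 2
    then show False using h ye by simp
  next
    case 3
    define f where "f = z e"
    have f: "q < f" "f < r" using h ye 3 by (simp_all add: f_def)
    have "z f = e" using zz f_def by simp
    then have "f < q \<or> (f = q \<and> r \<le> r)" using mx[of f r] f e pq by (simp add: y_q)
    then show False using f by simp
  qed
qed

lemma condB:
  assumes qj: "q < j" and c1: "y q < y j"
    and c2: "\<forall>e. q<e \<and> e<j \<longrightarrow> \<not>(y q < y e \<and> y e < y j)"
    and c3: "\<forall>e. y q < e \<and> e < y j \<longrightarrow> \<not>(q < y (transpose q j e) \<and> y (transpose q j e) < j)"
  shows "j = r"
proof (rule ccontr)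
  assume jr: "j \<noteq> r"
  define p where "p = z r"
  define s where "s = z q"
  have zp: "z p = r" and zs: "z s = q" using zz by (simp_all add: p_def s_def)
  have pq': "p < q" and ps': "p < s" using pq ps by (simp_all add: p_def s_def)
  have sq: "s \<noteq> q" and sr: "s \<noteq> r" using fpf zq_ne_r by (auto simp: s_def)
  show False
  proof (cases "j = s")
    case True
    have "\<not> s < r"
    proof
      assume "s < r"
      then have "s < q \<or> (s = q \<and> r \<le> r)" using mx[of s r] pq' qj True zs by (simp add: p_def)
      then show False using qj True by simp
    qed
    then have rs: "r < s" using sr by simp
    have ys: "y s = r" using y_oth[of s] sq sr zs by simp
    have yjr: "y j = r" using True ys by simp
    have "y q < q" using pq' by (simp add: y_q p_def)
    then have "\<not>(q < y (transpose q j q) \<and> y (transpose q j q) < j)"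
      using c3 qr yjr by auto
    moreover have "y (transpose q j q) = r" using True ys by simp
    ultimately show False using qr rs True by simp
  next
    case False
    have jq: "j \<noteq> q" using qj by simp
    have jp: "j \<noteq> p" using qj pq' by simp
    have zjq: "z j \<noteq> q" using False zz by (metis s_def)
    have zjr: "z j \<noteq> r" using jp zz by (metis p_def)
    define u where "u = z j"
    have yj: "y j = u" using y_oth[of j] jq jr zjq zjr by (simp add: u_def)
    have pu: "p < u" using c1 yj by (simp add: y_q p_def)
    show False
    proof (cases "j < r")
      case True
      then have "j < q \<or> (j = q \<and> r \<le> r)" using mx[of j r] pq' qj pu by (simp add: p_def u_def)
      then show False using qj by simp
    next
      case False
      then have rj: "r < j" using jr by simp
      have "\<not> (p < s \<and> s < u)" using c2 qr rj by (auto simp: y_q y_r yj p_def s_def)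
      then have us: "u \<le> s" using ps' by simp
      have "u \<noteq> s" using zz jq by (metis u_def s_def)
      then have us: "u < s" using us by simp
      have uq: "u \<noteq> q" using zjq u_def by simp
      have "\<not> u < q"
      proof
        assume "u < q"
        then have "q < q \<or> (q = q \<and> j \<le> r)" using mx[of q j] qj us by (simp add: u_def s_def)
        then show False using rj by simp
      qed
      then have qu: "q < u" using uq by simp
      have uj: "u \<noteq> j" using fpf u_def by simp
      show False
      proof (cases "u < j")
        case True
        have "y q < q" using pq' by (simp add: y_q p_def)
        then have "\<not>(q < y (transpose q j q) \<and> y (transpose q j q) < j)"
          using c3 qu yj by auto
        then show False using yj qu True by simp
      next
        case False
        then have ju: "j < u" using uj by simp
        then have "j < q \<or> (j = q \<and> s \<le> r)" using mx[of j s] us qj zs by (simp add: u_def)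
        then show False using qj by simp
      qed
    qed
  qed
qed

end


lemma FZ_props:
  assumes "z \<in> FZ"
  shows "\<And>i. z (z i) = i" "\<And>i. z i \<noteq> i" "finite {i. z i \<noteq> Theta i}"
proof -
  obtain w where w: "w \<in> SZ" "z = inv w \<circ> Theta \<circ> w" using assms FZ_def by auto
  have bw: "bij w" and fs: "finite {i. w i \<noteq> i}" using w SZ_def by auto
  have iw: "\<And>x. inv w (w x) = x" using bw bij_is_inj inv_f_f by metis
  have wi: "\<And>x. w (inv w x) = x" using bw bij_is_surj surj_f_inv_f by metis
  show "\<And>i. z (z i) = i" by (simp add: w(2) wi iw)
  show "\<And>i. z i \<noteq> i" by (metis comp_apply w(2) wi Theta_neq)
  define S where "S = {i. w i \<noteq> i}"
  have "{i. z i \<noteq> Theta i} \<subseteq> S \<union> Theta ` S"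
  proof
    fix i assume i: "i \<in> {i. z i \<noteq> Theta i}"
    show "i \<in> S \<union> Theta ` S"
    proof (rule ccontr)
      assume "i \<notin> S \<union> Theta ` S"
      then have "w i = i" "Theta i \<notin> S" by (auto simp: S_def image_iff)
      then have "w (Theta i) = Theta i" "w i = i" by (auto simp: S_def)
      then have "z i = Theta i" using iw w(2) by (metis comp_apply)
      then show False using i by simp
    qed
  qed
  moreover have "finite (S \<union> Theta ` S)" using fs S_def by simp
  ultimately show "finite {i. z i \<noteq> Theta i}" by (rule finite_subset)
qed

lemma bound: assumes "finite F" shows "\<exists>K. F \<subseteq> WW K"
proof -
  define M where "M = Max (insert 0 (abs ` F))"
  have M: "\<And>x. x \<in> F \<Longrightarrow> \<bar>x\<bar> \<le> M" "0 \<le> M" using assms by (auto simp: M_def)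
  have "F \<subseteq> WW (nat M + 1)"
  proof
    fix x assume "x \<in> F"
    then have "\<bar>x\<bar> \<le> M" by (rule M)
    then show "x \<in> WW (nat M + 1)" using M(2) by (auto simp: WW_def)
  qed
  then show ?thesis by blast
qed

lemma WW_mono: "K \<le> K' \<Longrightarrow> WW K \<subseteq> WW K'"
  unfolding WW_def by auto

theorem lemma3p17:
  fixes z :: "int \<Rightarrow> int" and q r :: int
  assumes "z \<in> FZ" and "z \<noteq> Theta"
    and "(q, r) \<in> fpf_visible_inv z"
    and "\<forall>(i, j) \<in> fpf_visible_inv z. i < q \<or> (i = q \<and> j \<le> r)"
  shows "PsiHatPlus (transpose q r \<circ> z \<circ> transpose q r) q = {z}"
proof -
  note zz = FZ_props(1)[OF assms(1)] and fpf = FZ_props(2)[OF assms(1)]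
    and fin = FZ_props(3)[OF assms(1)]
  have vis: "q < r" "z r < q" "z r < z q" using assms(3) by (auto simp: fpf_visible_inv_def)
  have mx: "a < q \<or> (a = q \<and> b \<le> r)" if "a<b" "z b < a" "z b < z a" for a b
  proof -
    have "(a, b) \<in> fpf_visible_inv z" using that by (auto simp: fpf_visible_inv_def)
    then show ?thesis using assms(4) by blast
  qed
  define y where "y = transpose q r \<circ> z \<circ> transpose q r"
  obtain K where K: "{i. z i \<noteq> Theta i} \<union> {q,r} \<subseteq> WW K" using bound fin by (metis finite.simps finite_Un)
  have gz: "good K z" using K zz fpf by (auto simp: good_def)
  have qW: "q \<in> WW K" and rW: "r \<in> WW K" using K by auto
  have gy: "good K y" unfolding y_def by (rule good_conj[OF gz qW rW])
  have yq: "y q < q" using y_q[OF zz fpf vis mx y_def] vis by simp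
  have zback: "transpose q r \<circ> y \<circ> transpose q r = z" by (simp add: y_def fun_eq_iff)
  have ellz: "ellhat_fpf z = ellhat_fpf y + 1"
    using key[OF gy qW rW vis(1) yq] condA[OF zz fpf vis mx y_def] zback by simp
  show ?thesis unfolding y_def[symmetric]
  proof (intro equalityI subsetI)
    fix v assume "v \<in> PsiHatPlus y q"
    then obtain j where v: "ellhat_fpf v = ellhat_fpf y + 1" "q < j" "v = transpose q j \<circ> y \<circ> transpose q j"
      unfolding PsiHatPlus_def by blast
    obtain K1 where K1: "{j} \<subseteq> WW K1" using bound[of "{j}"] by auto
    define K' where "K' = max K K1"
    have jW: "j \<in> WW K'" using K1 WW_mono[of K1 K'] by (auto simp: K'_def)
    have qW': "q \<in> WW K'" using qW WW_mono[of K K'] by (auto simp: K'_def)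
    have gy': "good K' y" using good_mono[OF gy] by (simp add: K'_def)
    have c: "y q < y j \<and> (\<forall>e. q<e \<and> e<j \<longrightarrow> \<not>(y q < y e \<and> y e < y j)) \<and>
     (\<forall>e. y q < e \<and> e < y j \<longrightarrow> \<not>(q < y (transpose q j e) \<and> y (transpose q j e) < j))"
      using key[OF gy' qW' jW v(2) yq] v by simp
    then have "j = r" using condB[OF zz fpf vis mx y_def v(2)] by blast
    then show "v \<in> {z}" using v zback by simp
  next
    fix v assume "v \<in> {z}"
    then show "v \<in> PsiHatPlus y q" using assms(1) ellz zback vis(1) unfolding PsiHatPlus_def by auto
  qed
qed

end
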